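(* Let $\Gamma$ be a (finite or infinite) bipartite graph with $|V(\Gamma)|\geq 4$. The following are equivalent: (1) $\Gamma$ is a discrete half graph; (2) $P_5\not\leq\Gamma$ and $\Gamma$ is critical.
   Context: A bipartite graph $\Gamma$ with bipartition $\{X,Y\}$ is a half graph if there exist a linear order $L$ on $X$ and a bijection $\varphi:X\to Y$ such that $E(\Gamma)=\{\{x,\varphi(x')\}: x\leq x' \bmod L\}$; such $L$ is unique. A linear order $L$ is discrete if every element that is not the smallest has a predecessor and every element that is not the largest has a successor. A half graph is discrete if the linear order $L$ above is discrete. $P_5$ is the path on 5 vertices; $G\leq H$ means $G$ is isomorphic to an induced subgraph of $H$. A module of a graph is a set $M$ of vertices such that each vertex outside $M$ is adjacent to all or none of $M$; $\emptyset$, $V(\Gamma)$ and singletons are trivial; $\Gamma$ is prime if $|V(\Gamma)|\geq 3$ and all its modules are trivial; a prime graph $\Gamma$ is critical if $\Gamma-v$ is not prime for every vertex $v$. *)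

theory Defs
  imports Main
begin

definition graph :: "'a set \<Rightarrow> ('a \<Rightarrow> 'a \<Rightarrow> bool) \<Rightarrow> bool" where
  "graph V E \<longleftrightarrow> (\<forall>u v. E u v \<longrightarrow> u \<in> V \<and> v \<in> V \<and> u \<noteq> v \<and> E v u)"

definition bipartite :: "'a set \<Rightarrow> ('a \<Rightarrow> 'a \<Rightarrow> bool) \<Rightarrow> bool" where
  "bipartite V E \<longleftrightarrow> (\<exists>X Y. X \<inter> Y = {} \<and> X \<union> Y = V \<and>
      (\<forall>u\<in>X. \<forall>v\<in>X. \<not> E u v) \<and> (\<forall>u\<in>Y. \<forall>v\<in>Y. \<not> E u v))"

definition discrete_order :: "'a set \<Rightarrow> 'a rel \<Rightarrow> bool" where
  "discrete_order X r \<longleftrightarrow>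
     (\<forall>x\<in>X. (\<exists>y\<in>X. (y, x) \<in> r \<and> y \<noteq> x) \<longrightarrow>
        (\<exists>p\<in>X. (p, x) \<in> r \<and> p \<noteq> x \<and>
           \<not> (\<exists>z\<in>X. (p, z) \<in> r \<and> (z, x) \<in> r \<and> z \<noteq> p \<and> z \<noteq> x))) \<and>
     (\<forall>x\<in>X. (\<exists>y\<in>X. (x, y) \<in> r \<and> y \<noteq> x) \<longrightarrow>
        (\<exists>s\<in>X. (x, s) \<in> r \<and> s \<noteq> x \<and>
           \<not> (\<exists>z\<in>X. (x, z) \<in> r \<and> (z, s) \<in> r \<and> z \<noteq> x \<and> z \<noteq> s)))"

definition half_graph_wrt ::
  "'a set \<Rightarrow> ('a \<Rightarrow> 'a \<Rightarrow> bool) \<Rightarrow> 'a set \<Rightarrow> 'a set \<Rightarrow> 'a rel \<Rightarrow> ('a \<Rightarrow> 'a) \<Rightarrow> bool" where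
  "half_graph_wrt V E X Y r \<phi> \<longleftrightarrow>
     X \<inter> Y = {} \<and> X \<union> Y = V \<and> r \<subseteq> X \<times> X \<and> linear_order_on X r \<and>
     bij_betw \<phi> X Y \<and>
     (\<forall>u v. E u v \<longleftrightarrow> (\<exists>x\<in>X. \<exists>x'\<in>X. (x, x') \<in> r \<and>
                         ((u = x \<and> v = \<phi> x') \<or> (v = x \<and> u = \<phi> x'))))"

definition discrete_half_graph :: "'a set \<Rightarrow> ('a \<Rightarrow> 'a \<Rightarrow> bool) \<Rightarrow> bool" where
  "discrete_half_graph V E \<longleftrightarrow>
     (\<exists>X Y r \<phi>. half_graph_wrt V E X Y r \<phi> \<and> discrete_order X r)"

definition contains_induced_P5 :: "'a set \<Rightarrow> ('a \<Rightarrow> 'a \<Rightarrow> bool) \<Rightarrow> bool" where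
  "contains_induced_P5 V E \<longleftrightarrow>
     (\<exists>f :: nat \<Rightarrow> 'a. inj_on f {0..<5} \<and> f ` {0..<5} \<subseteq> V \<and>
        (\<forall>i<5. \<forall>j<5. E (f i) (f j) \<longleftrightarrow> (i = Suc j \<or> j = Suc i)))"

text \<open>Modules, primality and criticality. All notions only look at vertices in V,
so the induced subgraph Gamma - v is represented by (V - {v}, E).\<close>

definition module :: "'a set \<Rightarrow> ('a \<Rightarrow> 'a \<Rightarrow> bool) \<Rightarrow> 'a set \<Rightarrow> bool" where
  "module V E M \<longleftrightarrow> M \<subseteq> V \<and>
     (\<forall>v\<in>V - M. (\<forall>m\<in>M. E v m) \<or> (\<forall>m\<in>M. \<not> E v m))"

definition trivial_module :: "'a set \<Rightarrow> 'a set \<Rightarrow> bool" where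
  "trivial_module V M \<longleftrightarrow> M = {} \<or> M = V \<or> (\<exists>x. M = {x})"

definition prime_graph :: "'a set \<Rightarrow> ('a \<Rightarrow> 'a \<Rightarrow> bool) \<Rightarrow> bool" where
  "prime_graph V E \<longleftrightarrow> (infinite V \<or> 3 \<le> card V) \<and>
     (\<forall>M. module V E M \<longrightarrow> trivial_module V M)"

definition critical :: "'a set \<Rightarrow> ('a \<Rightarrow> 'a \<Rightarrow> bool) \<Rightarrow> bool" where
  "critical V E \<longleftrightarrow> prime_graph V E \<and> (\<forall>v\<in>V. \<not> prime_graph (V - {v}) E)"

end

theory Submission
  imports Defs
begin

lemma graph_sym: "graph V E \<Longrightarrow> E u v \<Longrightarrow> E v u" unfolding graph_def by blast
lemma graph_V: "graph V E \<Longrightarrow> E u v \<Longrightarrow> u \<in> V \<and> v \<in> V" unfolding graph_def by blast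
lemma graph_irr: "graph V E \<Longrightarrow> \<not> E u u" unfolding graph_def by blast

lemma mkP5:
  assumes g: "graph V E" and e: "E p0 p1" "E p1 p2" "E p2 p3" "E p3 p4"
    and n: "\<not> E p0 p2" "\<not> E p0 p3" "\<not> E p0 p4" "\<not> E p1 p3" "\<not> E p1 p4" "\<not> E p2 p4"
  shows "contains_induced_P5 V E"
proof -
  have s: "E p1 p0" "E p2 p1" "E p3 p2" "E p4 p3" using e graph_sym[OF g] by auto
  have ns: "\<not> E p2 p0" "\<not> E p3 p0" "\<not> E p4 p0" "\<not> E p3 p1" "\<not> E p4 p1" "\<not> E p4 p2"
    using n graph_sym[OF g] by auto
  have irr: "\<And>u. \<not> E u u" using graph_irr[OF g] by auto
  have V: "p0 \<in> V" "p1 \<in> V" "p2 \<in> V" "p3 \<in> V" "p4 \<in> V" using e graph_V[OF g] by auto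
  have d: "p0 \<noteq> p1" "p0 \<noteq> p2" "p0 \<noteq> p3" "p0 \<noteq> p4" "p1 \<noteq> p2" "p1 \<noteq> p3" "p1 \<noteq> p4"
     "p2 \<noteq> p3" "p2 \<noteq> p4" "p3 \<noteq> p4"
    using e n s ns irr by metis+
  define f where "f = (\<lambda>i::nat. [p0,p1,p2,p3,p4] ! i)"
  have f: "f 0 = p0" "f 1 = p1" "f 2 = p2" "f 3 = p3" "f 4 = p4"
    by (simp_all add: f_def numeral_eq_Suc)
  have five: "\<And>i::nat. i < 5 \<Longrightarrow> i = 0 \<or> i = 1 \<or> i = 2 \<or> i = 3 \<or> i = 4" by auto
  have "inj_on f {0..<5}"
    unfolding inj_on_def using five f d by (auto, metis+)
  moreover have "f ` {0..<5} \<subseteq> V" using f V by (auto dest!: five)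
  moreover have "\<forall>i<5. \<forall>j<5. E (f i) (f j) \<longleftrightarrow> (i = Suc j \<or> j = Suc i)"
  proof (intro allI impI)
    fix i j :: nat assume "i < 5" "j < 5"
    then show "E (f i) (f j) \<longleftrightarrow> (i = Suc j \<or> j = Suc i)"
      using five[of i] five[of j] f e n s ns irr by auto
  qed
  ultimately show ?thesis unfolding contains_induced_P5_def by blast
qed

lemma modU: "module V E M \<Longrightarrow> v \<in> V \<Longrightarrow> v \<notin> M \<Longrightarrow> m \<in> M \<Longrightarrow> m' \<in> M \<Longrightarrow> E v m \<Longrightarrow> E v m'"
  unfolding module_def by blast
lemma modN: "module V E M \<Longrightarrow> v \<in> V \<Longrightarrow> v \<notin> M \<Longrightarrow> m \<in> M \<Longrightarrow> m' \<in> M \<Longrightarrow> \<not> E v m \<Longrightarrow> \<not> E v m'"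
  unfolding module_def by blast
lemma nontriv_notprime: "module W E M \<Longrightarrow> M \<noteq> {} \<Longrightarrow> (\<forall>z. M \<noteq> {z}) \<Longrightarrow> M \<noteq> W \<Longrightarrow> \<not> prime_graph W E"
  unfolding prime_graph_def trivial_module_def by blast

locale hg =
  fixes V :: "'a set" and E X Y r \<phi>
  assumes g: "graph V E" and h: "half_graph_wrt V E X Y r \<phi>"
    and sz: "infinite V \<or> 4 \<le> card V"
begin

lemma XY: "X \<inter> Y = {}" "X \<union> Y = V" "r \<subseteq> X \<times> X" "linear_order_on X r" "bij_betw \<phi> X Y"
  using h unfolding half_graph_wrt_def by auto
lemma Edef: "E u v \<longleftrightarrow> (\<exists>x\<in>X. \<exists>x'\<in>X. (x, x') \<in> r \<and>
                         ((u = x \<and> v = \<phi> x') \<or> (v = x \<and> u = \<phi> x')))"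
  using h unfolding half_graph_wrt_def by blast

lemma phiY: "x \<in> X \<Longrightarrow> \<phi> x \<in> Y" using XY(5) by (auto simp: bij_betw_def)
lemma phi_inj: "x \<in> X \<Longrightarrow> c \<in> X \<Longrightarrow> \<phi> x = \<phi> c \<Longrightarrow> x = c"
  using XY(5) by (auto simp: bij_betw_def inj_on_def)
lemma Yphi: "y \<in> Y \<Longrightarrow> \<exists>c\<in>X. y = \<phi> c" using XY(5) by (auto simp: bij_betw_def)
lemma phiX: "x \<in> X \<Longrightarrow> \<phi> x \<notin> X" using phiY XY(1) by blast

lemma EXphi: "x \<in> X \<Longrightarrow> c \<in> X \<Longrightarrow> E x (\<phi> c) \<longleftrightarrow> (x, c) \<in> r"
  unfolding Edef using phi_inj phiX by blast
lemma EphiX: "x \<in> X \<Longrightarrow> c \<in> X \<Longrightarrow> E (\<phi> c) x \<longleftrightarrow> (x, c) \<in> r"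
  using EXphi graph_sym[OF g] by blast
lemma noXX: "x \<in> X \<Longrightarrow> x' \<in> X \<Longrightarrow> \<not> E x x'"
  unfolding Edef using phiX by blast
lemma noYY: "a \<in> X \<Longrightarrow> b \<in> X \<Longrightarrow> \<not> E (\<phi> a) (\<phi> b)"
  unfolding Edef using phiX phiY XY(1) by blast
lemma Vcases: "u \<in> V \<Longrightarrow> u \<in> X \<or> (\<exists>c\<in>X. u = \<phi> c)"
  using XY(2) Yphi by blast
lemma phiV: "x \<in> X \<Longrightarrow> \<phi> x \<in> V" using phiY XY(2) by blast
lemma XV: "x \<in> X \<Longrightarrow> x \<in> V" using XY(2) by blast

lemma rrefl: "x \<in> X \<Longrightarrow> (x, x) \<in> r"
  using XY(4) unfolding linear_order_on_def partial_order_on_def preorder_on_def refl_on_def by blast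
lemma rtrans: "(x, y) \<in> r \<Longrightarrow> (y, z) \<in> r \<Longrightarrow> (x, z) \<in> r"
  using XY(4) unfolding linear_order_on_def partial_order_on_def preorder_on_def trans_def by blast
lemma rantisym: "(x, y) \<in> r \<Longrightarrow> (y, x) \<in> r \<Longrightarrow> x = y"
  using XY(4) unfolding linear_order_on_def partial_order_on_def antisym_def by blast
lemma rtotal: "x \<in> X \<Longrightarrow> y \<in> X \<Longrightarrow> (x, y) \<notin> r \<Longrightarrow> (y, x) \<in> r"
  using XY(4) rrefl unfolding linear_order_on_def total_on_def by metis

lemma sideX: "u \<in> X \<Longrightarrow> E u v \<Longrightarrow> \<exists>c\<in>X. v = \<phi> c"
  using Edef[of u v] phiX by metis
lemma sideY: "c \<in> X \<Longrightarrow> E (\<phi> c) v \<Longrightarrow> v \<in> X"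
  using Edef[of "\<phi> c" v] phiX phi_inj by metis

lemma noP5: "\<not> contains_induced_P5 V E"
proof
  assume "contains_induced_P5 V E"
  then obtain f :: "nat \<Rightarrow> 'a" where fV: "f ` {0..<5} \<subseteq> V"
    and fe: "\<forall>i<5. \<forall>j<5. E (f i) (f j) \<longleftrightarrow> (i = Suc j \<or> j = Suc i)"
    unfolding contains_induced_P5_def by blast
  have V: "f 0 \<in> V" "f 1 \<in> V" "f 2 \<in> V" "f 3 \<in> V" "f 4 \<in> V" using fV by auto
  have fe': "\<And>i j. i < 5 \<Longrightarrow> j < 5 \<Longrightarrow> E (f i) (f j) \<longleftrightarrow> (i = Suc j \<or> j = Suc i)"
    using fe by blast
  have e: "E (f 0) (f 1)" "E (f 1) (f 2)" "E (f 2) (f 3)" "E (f 3) (f 4)"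
    using fe'[of 0 1] fe'[of 1 2] fe'[of 2 3] fe'[of 3 4] by simp_all
  have n: "\<not> E (f 0) (f 3)" "\<not> E (f 4) (f 1)"
    using fe'[of 0 3] fe'[of 4 1] by simp_all
  show False
  proof (cases "f 0 \<in> X")
    case True
    then obtain b where b: "b \<in> X" "f 1 = \<phi> b" using sideX[OF True e(1)] by blast
    then have f2: "f 2 \<in> X" using sideY[OF b(1)] e(2) by simp
    then obtain d where d: "d \<in> X" "f 3 = \<phi> d" using sideX[OF f2 e(3)] by blast
    then have f4: "f 4 \<in> X" using sideY[OF d(1)] e(4) by simp
    have 1: "(f 0, b) \<in> r" using e(1) EXphi[OF True b(1)] b(2) by simp
    have 2: "(f 2, b) \<in> r" using e(2) EphiX[OF f2 b(1)] b(2) by simp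
    have 3: "(f 2, d) \<in> r" using e(3) EXphi[OF f2 d(1)] d(2) by simp
    have 4: "(f 4, d) \<in> r" using e(4) EphiX[OF f4 d(1)] d(2) by simp
    have 5: "(f 0, d) \<notin> r" using n(1) EXphi[OF True d(1)] d(2) by simp
    have 6: "(f 4, b) \<notin> r" using n(2) EXphi[OF f4 b(1)] b(2) by simp
    have "(b, f 4) \<in> r" using rtotal[OF f4 b(1) 6] .
    then have "(b, d) \<in> r" using 4 rtrans by blast
    then have "(f 0, d) \<in> r" using 1 rtrans by blast
    then show False using 5 by blast
  next
    case False
    then obtain a where a: "a \<in> X" "f 0 = \<phi> a" using Vcases V(1) by blast
    then have f1: "f 1 \<in> X" using sideY[OF a(1)] e(1) by simp
    then obtain c where c: "c \<in> X" "f 2 = \<phi> c" using sideX[OF f1 e(2)] by blast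
    then have f3: "f 3 \<in> X" using sideY[OF c(1)] e(3) by simp
    then obtain ee where ee: "ee \<in> X" "f 4 = \<phi> ee" using sideX[OF f3 e(4)] by blast
    have 1: "(f 1, a) \<in> r" using e(1) EphiX[OF f1 a(1)] a(2) by simp
    have 3: "(f 3, c) \<in> r" using e(3) EphiX[OF f3 c(1)] c(2) by simp
    have 4: "(f 3, ee) \<in> r" using e(4) EXphi[OF f3 ee(1)] ee(2) by simp
    have 5: "(f 3, a) \<notin> r" using n(1) EphiX[OF f3 a(1)] a(2) by simp
    have 6: "(f 1, ee) \<notin> r" using n(2) EphiX[OF f1 ee(1)] ee(2) by simp
    have "(ee, f 1) \<in> r" using rtotal[OF f1 ee(1) 6] .
    then have "(f 3, a) \<in> r" using 1 4 rtrans by blast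
    then show False using 5 by blast
  qed
qed

lemma size3: "infinite V \<or> 3 \<le> card V" using sz by auto

lemma two_left: "a \<in> V \<Longrightarrow> b \<in> V \<Longrightarrow> V - {a, b} \<noteq> {} \<and> (\<forall>z. V - {a, b} \<noteq> {z})"
proof -
  have "\<not> V \<subseteq> {a, b, z}" for z
  proof
    assume "V \<subseteq> {a, b, z}"
    moreover have "card {a, b, z} \<le> 3" by (auto simp: card_insert_if)
    ultimately have "finite V" "card V \<le> 3"
      using finite_subset card_mono[of "{a,b,z}" V] by fastforce+
    then show False using sz by auto
  qed
  then show ?thesis by blast
qed


lemma prime: "prime_graph V E"
  unfolding prime_graph_def
proof (intro conjI allI impI size3)
  fix M assume mod: "module V E M"
  show "trivial_module V M"
  proof (rule ccontr)
    assume nt: "\<not> trivial_module V M"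
    then have ne: "M \<noteq> {}" "\<And>z. M \<noteq> {z}" "M \<noteq> V" unfolding trivial_module_def by auto
    have MV: "M \<subseteq> V" using mod unfolding module_def by blast
    obtain m m' where mm: "m \<in> M" "m' \<in> M" "m \<noteq> m'" using ne(1,2) by blast
    have step1: "\<exists>a\<in>X. a \<in> M \<and> (\<exists>b\<in>X. \<phi> b \<in> M)"
    proof -
      have "m \<in> V" "m' \<in> V" using mm MV by auto
      then consider "m \<in> X" "m' \<in> X" | a where "m \<in> X" "a \<in> X" "m' = \<phi> a"
        | a where "m' \<in> X" "a \<in> X" "m = \<phi> a" | a b where "a \<in> X" "b \<in> X" "m = \<phi> a" "m' = \<phi> b"
        using Vcases by metis
      then show ?thesis
      proof cases
        case 1
        have "\<exists>u\<in>X. \<exists>u'\<in>X. u \<in> M \<and> u' \<in> M \<and> (u, u') \<in> r \<and> (u', u) \<notin> r"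
          using 1 mm rtotal rantisym by metis
        then obtain u u' where u: "u \<in> X" "u' \<in> X" "u \<in> M" "u' \<in> M" "(u, u') \<in> r" "(u', u) \<notin> r" by blast
        have "\<phi> u \<in> M"
        proof (rule ccontr)
          assume "\<phi> u \<notin> M"
          moreover have "E (\<phi> u) u" using EphiX[OF u(1) u(1)] rrefl[OF u(1)] by simp
          ultimately have "E (\<phi> u) u'" using modU[OF mod phiV[OF u(1)]] u by blast
          then show False using EphiX[OF u(2) u(1)] u by simp
        qed
        then show ?thesis using u by blast
      next
        case 2 then show ?thesis using mm by blast
      next
        case 3 then show ?thesis using mm by blast
      next
        case 4
        have "\<exists>u\<in>X. \<exists>u'\<in>X. \<phi> u \<in> M \<and> \<phi> u' \<in> M \<and> (u, u') \<in> r \<and> (u', u) \<notin> r"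
          using 4 mm rtotal rantisym by metis
        then obtain u u' where u: "u \<in> X" "u' \<in> X" "\<phi> u \<in> M" "\<phi> u' \<in> M" "(u, u') \<in> r" "(u', u) \<notin> r" by blast
        have "u' \<in> M"
        proof (rule ccontr)
          assume "u' \<notin> M"
          moreover have "E u' (\<phi> u')" using EXphi[OF u(2) u(2)] rrefl[OF u(2)] by simp
          ultimately have "E u' (\<phi> u)" using modU[OF mod XV[OF u(2)]] u by blast
          then show False using EXphi[OF u(2) u(1)] u by simp
        qed
        then show ?thesis using u by blast
      qed
    qed
    then obtain a b where ab: "a \<in> X" "a \<in> M" "b \<in> X" "\<phi> b \<in> M" by blast
    have pa: "\<phi> a \<in> M"
    proof (rule ccontr)
      assume "\<phi> a \<notin> M"
      moreover have "\<not> E (\<phi> a) (\<phi> b)" using noYY ab by blast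
      ultimately have "\<not> E (\<phi> a) a" using modN[OF mod phiV[OF ab(1)]] ab by blast
      then show False using EphiX[OF ab(1) ab(1)] rrefl[OF ab(1)] by simp
    qed
    have pc: "\<phi> c \<in> M" if c: "c \<in> X" for c
    proof (rule ccontr)
      assume cn: "\<phi> c \<notin> M"
      have "\<not> E (\<phi> c) (\<phi> a)" using noYY ab c by blast
      then have nA: "\<forall>m\<in>M. \<not> E (\<phi> c) m" using modN[OF mod phiV[OF c] cn pa] by blast
      then have "c \<notin> M" using EphiX[OF c c] rrefl[OF c] by auto
      then have "\<not> E c (\<phi> a)" using modN[OF mod XV[OF c] _ ab(2) pa] noXX[OF c ab(1)] by blast
      moreover have "\<not> E (\<phi> c) a" using nA ab by blast
      ultimately show False using EXphi[OF c ab(1)] EphiX[OF ab(1) c] rtotal[OF c ab(1)] by blast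
    qed
    have cc: "c \<in> M" if c: "c \<in> X" for c
    proof (rule ccontr)
      assume cn: "c \<notin> M"
      have "\<not> E c a" using noXX ab c by blast
      then have "\<not> E c (\<phi> c)" using modN[OF mod XV[OF c] cn ab(2) pc[OF c]] by blast
      then show False using EXphi[OF c c] rrefl[OF c] by simp
    qed
    have "V \<subseteq> M" using Vcases pc cc by blast
    then show False using ne MV by blast
  qed
qed

end

locale hgd = hg +
  assumes disc: "discrete_order X r"
begin

lemma pred: "x \<in> X \<Longrightarrow> (\<exists>y\<in>X. (y, x) \<in> r \<and> y \<noteq> x) \<Longrightarrow>
        (\<exists>p\<in>X. (p, x) \<in> r \<and> p \<noteq> x \<and>
           \<not> (\<exists>z\<in>X. (p, z) \<in> r \<and> (z, x) \<in> r \<and> z \<noteq> p \<and> z \<noteq> x))"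
  using disc unfolding discrete_order_def by blast
lemma succ: "x \<in> X \<Longrightarrow> (\<exists>y\<in>X. (x, y) \<in> r \<and> y \<noteq> x) \<Longrightarrow>
        (\<exists>s\<in>X. (x, s) \<in> r \<and> s \<noteq> x \<and>
           \<not> (\<exists>z\<in>X. (x, z) \<in> r \<and> (z, s) \<in> r \<and> z \<noteq> x \<and> z \<noteq> s))"
  using disc unfolding discrete_order_def by blast

lemma del_X: assumes x: "x \<in> X" shows "\<not> prime_graph (V - {x}) E"
proof (cases "\<exists>y\<in>X. (y, x) \<in> r \<and> y \<noteq> x")
  case True
  then obtain p where p: "p \<in> X" "(p, x) \<in> r" "p \<noteq> x"
    "\<not> (\<exists>z\<in>X. (p, z) \<in> r \<and> (z, x) \<in> r \<and> z \<noteq> p \<and> z \<noteq> x)"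
    using pred[OF x] by blast
  let ?M = "{\<phi> p, \<phi> x}"
  have "module (V - {x}) E ?M"
    unfolding module_def
  proof (intro conjI ballI)
    show "?M \<subseteq> V - {x}" using phiV phiX[OF p(1)] phiX[OF x] p x by auto
    fix w assume w: "w \<in> V - {x} - ?M"
    show "(\<forall>m\<in>?M. E w m) \<or> (\<forall>m\<in>?M. \<not> E w m)"
    proof (cases "w \<in> X")
      case True
      have "(w, p) \<in> r \<longleftrightarrow> (w, x) \<in> r"
      proof
        assume "(w, p) \<in> r" then show "(w, x) \<in> r" using rtrans[OF _ p(2)] by blast
      next
        assume wx: "(w, x) \<in> r"
        show "(w, p) \<in> r"
        proof (rule ccontr)
          assume "(w, p) \<notin> r"
          then have "(p, w) \<in> r" "w \<noteq> p" using rtotal[OF True p(1)] rrefl[OF True] by auto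
          moreover have "w \<noteq> x" using w by blast
          ultimately show False using p(4) wx True by blast
        qed
      qed
      then show ?thesis using EXphi[OF True p(1)] EXphi[OF True x] by auto
    next
      case False
      then obtain c where "c \<in> X" "w = \<phi> c" using Vcases w by blast
      then show ?thesis using noYY p x by auto
    qed
  qed
  moreover have "\<phi> p \<noteq> \<phi> x" using phi_inj p x by blast
  then have "\<forall>z. ?M \<noteq> {z}" by auto
  moreover have "p \<in> V - {x}" "p \<notin> ?M" using p XV phiX[OF p(1)] phiX[OF x] x by auto
  then have "?M \<noteq> V - {x}" by blast
  ultimately show ?thesis using nontriv_notprime[of "V - {x}" E ?M] by blast
next
  case False
  let ?M = "V - {x, \<phi> x}"
  have "module (V - {x}) E ?M"
    unfolding module_def
  proof (intro conjI ballI)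
    show "?M \<subseteq> V - {x}" by auto
    fix w assume w: "w \<in> V - {x} - ?M"
    then have "w = \<phi> x" by blast
    have "\<not> E (\<phi> x) m" if m: "m \<in> ?M" for m
    proof
      assume e: "E (\<phi> x) m"
      then have mX: "m \<in> X" using sideY[OF x] by blast
      then have "(m, x) \<in> r" using e EphiX[OF mX x] by blast
      moreover have "m \<noteq> x" using m by blast
      ultimately show False using False mX by blast
    qed
    then show "(\<forall>m\<in>?M. E w m) \<or> (\<forall>m\<in>?M. \<not> E w m)" using \<open>w = \<phi> x\<close> by blast
  qed
  moreover have "?M \<noteq> {}" "\<forall>z. ?M \<noteq> {z}" using two_left[OF XV[OF x] phiV[OF x]] by blast+
  moreover have "\<phi> x \<in> V - {x}" using phiV[OF x] phiX[OF x] x by auto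
  then have "?M \<noteq> V - {x}" by blast
  ultimately show ?thesis using nontriv_notprime by metis
qed

lemma del_Y: assumes y: "y \<in> X" shows "\<not> prime_graph (V - {\<phi> y}) E"
proof (cases "\<exists>z\<in>X. (y, z) \<in> r \<and> z \<noteq> y")
  case True
  then obtain s where s: "s \<in> X" "(y, s) \<in> r" "s \<noteq> y"
    "\<not> (\<exists>z\<in>X. (y, z) \<in> r \<and> (z, s) \<in> r \<and> z \<noteq> y \<and> z \<noteq> s)"
    using succ[OF y] by blast
  let ?M = "{y, s}"
  have "module (V - {\<phi> y}) E ?M"
    unfolding module_def
  proof (intro conjI ballI)
    show "?M \<subseteq> V - {\<phi> y}" using XV phiX[OF s(1)] phiX[OF y] s y by auto
    fix w assume w: "w \<in> V - {\<phi> y} - ?M"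
    show "(\<forall>m\<in>?M. E w m) \<or> (\<forall>m\<in>?M. \<not> E w m)"
    proof (cases "w \<in> X")
      case True
      then show ?thesis using noXX s y by auto
    next
      case False
      then obtain c where c: "c \<in> X" "w = \<phi> c" using Vcases w by blast
      then have "c \<noteq> y" using w by blast
      have "(y, c) \<in> r \<longleftrightarrow> (s, c) \<in> r"
      proof
        assume "(s, c) \<in> r" then show "(y, c) \<in> r" using rtrans[OF s(2)] by blast
      next
        assume yc: "(y, c) \<in> r"
        show "(s, c) \<in> r"
        proof (rule ccontr)
          assume "(s, c) \<notin> r"
          then have "(c, s) \<in> r" "c \<noteq> s" using rtotal[OF s(1) c(1)] rrefl[OF c(1)] by auto
          then show False using s(4) yc c(1) \<open>c \<noteq> y\<close> by blast
        qed
      qed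
      then show ?thesis using EphiX[OF y c(1)] EphiX[OF s(1) c(1)] c by auto
    qed
  qed
  moreover have "y \<noteq> s" using s by blast
  then have "\<forall>z. ?M \<noteq> {z}" by auto
  moreover have "\<phi> s \<in> V - {\<phi> y}" "\<phi> s \<notin> ?M" using s y phiV phiX[OF s(1)] phi_inj by auto
  then have "?M \<noteq> V - {\<phi> y}" by blast
  ultimately show ?thesis using nontriv_notprime[of "V - {\<phi> y}" E ?M] by blast
next
  case False
  let ?M = "V - {\<phi> y, y}"
  have "module (V - {\<phi> y}) E ?M"
    unfolding module_def
  proof (intro conjI ballI)
    show "?M \<subseteq> V - {\<phi> y}" by auto
    fix w assume w: "w \<in> V - {\<phi> y} - ?M"
    then have "w = y" by blast
    have "\<not> E y m" if m: "m \<in> ?M" for m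
    proof
      assume e: "E y m"
      then obtain c where c: "c \<in> X" "m = \<phi> c" using sideX[OF y] by blast
      then have "(y, c) \<in> r" using e EXphi[OF y c(1)] by blast
      moreover have "c \<noteq> y" using m c by blast
      ultimately show False using False c(1) by blast
    qed
    then show "(\<forall>m\<in>?M. E w m) \<or> (\<forall>m\<in>?M. \<not> E w m)" using \<open>w = y\<close> by blast
  qed
  moreover have "?M \<noteq> {}" "\<forall>z. ?M \<noteq> {z}" using two_left[OF phiV[OF y] XV[OF y]] by blast+
  moreover have "y \<in> V - {\<phi> y}" using phiX[OF y] y XV by auto
  then have "?M \<noteq> V - {\<phi> y}" by blast
  ultimately show ?thesis using nontriv_notprime by metis
qed

lemma critical: "critical V E"
  unfolding critical_def
proof (intro conjI ballI prime)
  fix v assume "v \<in> V"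
  then consider "v \<in> X" | c where "c \<in> X" "v = \<phi> c" using Vcases by blast
  then show "\<not> prime_graph (V - {v}) E"
  proof cases
    case 1 then show ?thesis using del_X by blast
  next
    case 2 then show ?thesis using del_Y by blast
  qed
qed

end

definition nbh :: "('a \<Rightarrow> 'a \<Rightarrow> bool) \<Rightarrow> 'a \<Rightarrow> 'a set" where
  "nbh E u = {w. E u w}"

lemma reach:
  assumes g: "graph V E" and tf: "\<And>a b c. \<not> (E a b \<and> E b c \<and> E a c)"
    and np: "\<not> contains_induced_P5 V E"
  shows "(E ^^ n) a c \<Longrightarrow> E a b \<Longrightarrow> E c d \<Longrightarrow> \<not> E a c \<Longrightarrow> \<not> E a d \<Longrightarrow> \<not> E b c \<Longrightarrow> \<not> E b d \<Longrightarrow> False"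
proof (induction n arbitrary: a b)
  case 0
  then have "a = c" by simp
  then show False using 0 graph_sym[OF g] by blast
next
  case (Suc n)
  from Suc.prems(1) obtain v where av: "E a v" and vc: "(E ^^ n) v c" by (rule relpowp_Suc_E2)
  have sy: "\<And>u w. E u w \<Longrightarrow> E w u" using graph_sym[OF g] by blast
  have bv: "\<not> E b v" using tf[of a b v] Suc.prems av by blast
  show False
  proof (cases "E v c")
    case True
    have "\<not> E v d" using tf[of v c d] True Suc.prems by blast
    then have "contains_induced_P5 V E"
      using mkP5[OF g, of b a v c d] sy[OF Suc.prems(2)] av True Suc.prems bv by blast
    then show False using np by blast
  next
    case False
    show False
    proof (cases "E v d")
      case True
      then have "contains_induced_P5 V E"
        using mkP5[OF g, of b a v d c] sy[OF Suc.prems(2)] sy[OF Suc.prems(3)] av False Suc.prems bv by blast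
      then show False using np by blast
    next
      case False2: False
      show False using Suc.IH[OF vc sy[OF av] Suc.prems(3) False False2 Suc.prems(4) Suc.prems(5)] .
    qed
  qed
qed

locale crit =
  fixes V :: "'a set" and E X Y
  assumes g: "graph V E" and disj: "X \<inter> Y = {}" and cov: "X \<union> Y = V"
    and iX: "\<forall>u\<in>X. \<forall>v\<in>X. \<not> E u v" and iY: "\<forall>u\<in>Y. \<forall>v\<in>Y. \<not> E u v"
    and sz: "infinite V \<or> 4 \<le> card V"
    and np: "\<not> contains_induced_P5 V E" and cr: "critical V E"
begin

lemma sym: "crit V E Y X"
  using g disj cov iX iY sz np cr unfolding crit_def by blast

lemma sy: "E u v \<Longrightarrow> E v u" using graph_sym[OF g] by blast
lemma EV: "E u v \<Longrightarrow> u \<in> V \<and> v \<in> V" using graph_V[OF g] by blast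
lemma irr: "\<not> E u u" using graph_irr[OF g] by blast
lemma noXX: "u \<in> X \<Longrightarrow> v \<in> X \<Longrightarrow> \<not> E u v" using iX by blast
lemma noYY: "u \<in> Y \<Longrightarrow> v \<in> Y \<Longrightarrow> \<not> E u v" using iY by blast
lemma otherX: "u \<in> X \<Longrightarrow> E u v \<Longrightarrow> v \<in> Y" using EV noXX cov by blast
lemma otherY: "u \<in> Y \<Longrightarrow> E u v \<Longrightarrow> v \<in> X" using EV noYY cov by blast
lemma XV: "x \<in> X \<Longrightarrow> x \<in> V" using cov by blast
lemma YV: "x \<in> Y \<Longrightarrow> x \<in> V" using cov by blast
lemma tf: "\<not> (E a b \<and> E b c \<and> E a c)"
proof
  assume h: "E a b \<and> E b c \<and> E a c"
  then have "a \<in> V" using EV by auto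
  then have "a \<in> X \<or> a \<in> Y" using cov by blast
  then show False
  proof
    assume a: "a \<in> X"
    then have "b \<in> Y" using otherX h by blast
    then have "c \<in> X" using otherY h by blast
    then show False using noXX a h by blast
  next
    assume a: "a \<in> Y"
    then have "b \<in> X" using otherY h by blast
    then have "c \<in> Y" using otherX h by blast
    then show False using noYY a h by blast
  qed
qed

lemma prime: "prime_graph V E" using cr unfolding critical_def by blast
lemma modV: "module V E M \<Longrightarrow> M \<noteq> {} \<Longrightarrow> (\<forall>z. M \<noteq> {z}) \<Longrightarrow> M = V"
  using prime unfolding prime_graph_def trivial_module_def by blast

lemma notpair: "V \<noteq> {u, v}"
proof
  assume "V = {u, v}"
  then have "finite V" "card V \<le> 2" by (auto simp: card_insert_if)
  then show False using sz by auto
qed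

lemma delM: assumes "v \<in> V"
  shows "\<exists>M. module (V - {v}) E M \<and> M \<noteq> {} \<and> (\<forall>z. M \<noteq> {z}) \<and> M \<noteq> V - {v}"
proof -
  have "infinite (V - {v}) \<or> 3 \<le> card (V - {v})"
  proof (cases "finite V")
    case True
    then have "card (V - {v}) = card V - 1" using assms by simp
    then show ?thesis using sz True by auto
  qed simp
  moreover have "\<not> prime_graph (V - {v}) E" using cr assms unfolding critical_def by blast
  ultimately obtain M where "module (V - {v}) E M" "\<not> trivial_module (V - {v}) M"
    unfolding prime_graph_def by blast
  then show ?thesis unfolding trivial_module_def by blast
qed

lemma twins: assumes "u \<in> V" "v \<in> V" "nbh E u = nbh E v" shows "u = v"
proof (rule ccontr)
  assume ne: "u \<noteq> v"
  have "module V E {u, v}"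
    unfolding module_def
  proof (intro conjI ballI)
    show "{u, v} \<subseteq> V" using assms by auto
    fix w assume "w \<in> V - {u, v}"
    have "E w u \<longleftrightarrow> E w v" using assms(3) sy unfolding nbh_def by blast
    then show "(\<forall>m\<in>{u, v}. E w m) \<or> (\<forall>m\<in>{u, v}. \<not> E w m)" by auto
  qed
  moreover have "\<forall>z. {u, v} \<noteq> {z}" using ne by auto
  ultimately have "{u, v} = V" using modV by blast
  then show False using notpair by metis
qed

lemma chain: assumes x: "x \<in> X" and x': "x' \<in> X"
  shows "nbh E x \<subseteq> nbh E x' \<or> nbh E x' \<subseteq> nbh E x"
proof (rule ccontr)
  assume "\<not> ?thesis"
  then obtain b d where b: "E x b" "\<not> E x' b" and d: "E x' d" "\<not> E x d"
    unfolding nbh_def by blast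
  let ?C = "{w. E\<^sup>*\<^sup>* x w}"
  have xV: "x \<in> V" using XV x by blast
  have CV: "?C \<subseteq> V"
  proof
    fix w assume "w \<in> ?C"
    then have "E\<^sup>*\<^sup>* x w" by simp
    then show "w \<in> V" by (induction rule: rtranclp_induct) (use xV EV in auto)
  qed
  have "module V E ?C"
    unfolding module_def
  proof (intro conjI ballI CV)
    fix v assume v: "v \<in> V - ?C"
    have "\<not> E v m" if "m \<in> ?C" for m
    proof
      assume "E v m"
      then have "E m v" by (rule sy)
      then have "E\<^sup>*\<^sup>* x v" using that by (simp add: rtranclp.rtrancl_into_rtrancl)
      then show False using v by blast
    qed
    then show "(\<forall>m\<in>?C. E v m) \<or> (\<forall>m\<in>?C. \<not> E v m)" by blast
  qed
  moreover have "x \<in> ?C" "b \<in> ?C" using b by auto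
  moreover have "x \<noteq> b" using b irr by blast
  ultimately have "?C \<noteq> {}" "\<forall>z. ?C \<noteq> {z}" by (blast, metis singletonD)
  then have "?C = V" using modV \<open>module V E ?C\<close> by blast
  then have "E\<^sup>*\<^sup>* x x'" using XV[OF x'] by blast
  then obtain n where "(E ^^ n) x x'" using rtranclp_imp_relpowp by metis
  moreover have "b \<in> Y" "d \<in> Y" using otherX x x' b d by auto
  moreover have "\<not> E x x'" using noXX[OF x x'] .
  moreover have "\<not> E b x'" using b sy by blast
  moreover have "\<not> E b d" using noYY \<open>b \<in> Y\<close> \<open>d \<in> Y\<close> by blast
  ultimately show False
    using reach[OF g tf np, of n x x' b d] b d by blast
qed

lemma dist: assumes x0: "x0 \<in> V" and M: "module (V - {x0}) E M" "M \<noteq> {}" "\<forall>z. M \<noteq> {z}" "M \<noteq> V - {x0}"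
  shows "\<exists>m1\<in>M. \<exists>m2\<in>M. E x0 m1 \<and> \<not> E x0 m2"
proof (rule ccontr)
  assume "\<not> ?thesis"
  then have u: "(\<forall>m\<in>M. E x0 m) \<or> (\<forall>m\<in>M. \<not> E x0 m)" by blast
  have "module V E M" using M(1) u x0 unfolding module_def by blast
  then have "M = V" using modV M by blast
  moreover have "M \<subseteq> V - {x0}" using M(1) unfolding module_def by blast
  ultimately show False using x0 by blast
qed

lemma F3: assumes x0: "x0 \<in> X"
  shows "\<exists>y. E x0 y \<and> (\<forall>x'\<in>X. nbh E x' \<subset> nbh E x0 \<longrightarrow> \<not> E x' y)"
proof (rule ccontr)
  assume "\<not> ?thesis"
  then have H: "\<And>y. E x0 y \<Longrightarrow> \<exists>x'\<in>X. nbh E x' \<subset> nbh E x0 \<and> E x' y" by blast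
  obtain M where M: "module (V - {x0}) E M" "M \<noteq> {}" "\<forall>z. M \<noteq> {z}" "M \<noteq> V - {x0}"
    using delM XV[OF x0] by blast
  have MV: "M \<subseteq> V - {x0}" using M(1) unfolding module_def by blast
  obtain m1 m2 where m: "m1 \<in> M" "m2 \<in> M" "E x0 m1" "\<not> E x0 m2"
    using dist[OF XV[OF x0] M] by blast
  obtain x' where x': "x' \<in> X" "nbh E x' \<subset> nbh E x0" "E x' m1" using H[OF m(3)] by blast
  have x'M: "x' \<in> M"
  proof (rule ccontr)
    assume "x' \<notin> M"
    moreover have "x' \<in> V - {x0}" using x' XV by auto
    ultimately have "E x' m2" using modU[OF M(1)] m x' by blast
    then show False using x'(2) m(4) unfolding nbh_def by blast
  qed
  have m1Y: "m1 \<in> Y" using otherX[OF x0 m(3)] .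
  have "module V E (M \<union> {x0})"
    unfolding module_def
  proof (intro conjI ballI)
    show "M \<union> {x0} \<subseteq> V" using MV XV[OF x0] by blast
    fix w assume w: "w \<in> V - (M \<union> {x0})"
    have wV: "w \<in> V - {x0}" "w \<notin> M" using w by auto
    have nM: "\<forall>m\<in>M. \<not> E w m"
    proof (cases "w \<in> X")
      case True
      then show ?thesis using modN[OF M(1) wV x'M] noXX[OF True x'(1)] by blast
    next
      case False
      then have "w \<in> Y" using w cov by blast
      then show ?thesis using modN[OF M(1) wV m(1)] noYY[OF _ m1Y] by blast
    qed
    have "\<not> E w x0"
    proof
      assume e: "E w x0"
      then have "w \<in> Y" using otherX[OF x0] sy by blast
      obtain x'' where x'': "x'' \<in> X" "nbh E x'' \<subset> nbh E x0" "E x'' w" using H sy[OF e] by blast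
      have "x'' \<notin> M" using nM x'' sy by blast
      moreover have "x'' \<in> V - {x0}" using x'' XV by auto
      ultimately have "\<not> E x'' m1" using modN[OF M(1) _ _ x'M m(1)] noXX[OF x''(1) x'(1)] by blast
      then have "nbh E x'' \<subseteq> nbh E x'" using chain[OF x''(1) x'(1)] x'(3) unfolding nbh_def by blast
      then have "E x' w" using x''(3) unfolding nbh_def by blast
      then show False using nM x'M sy by blast
    qed
    then show "(\<forall>m\<in>M \<union> {x0}. E w m) \<or> (\<forall>m\<in>M \<union> {x0}. \<not> E w m)" using nM by blast
  qed
  moreover have "M \<union> {x0} \<noteq> {}" by blast
  moreover have "\<forall>z. M \<union> {x0} \<noteq> {z}"
  proof (intro allI notI)
    fix z assume "M \<union> {x0} = {z}"
    then have "M \<subseteq> {z}" by blast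
    then have "M = {z}" using M(2) by blast
    then show False using M(3) by blast
  qed
  ultimately have "M \<union> {x0} = V" using modV by blast
  then have "M = V - {x0}" using MV by blast
  then show False using M(4) by blast
qed

end

context crit begin

definition phi where "phi x = (SOME y. E x y \<and> (\<forall>x'\<in>X. nbh E x' \<subset> nbh E x \<longrightarrow> \<not> E x' y))"

lemma phi_spec: assumes "x \<in> X"
  shows "E x (phi x)" "\<And>x'. x' \<in> X \<Longrightarrow> nbh E x' \<subset> nbh E x \<Longrightarrow> \<not> E x' (phi x)"
proof -
  have "E x (phi x) \<and> (\<forall>x'\<in>X. nbh E x' \<subset> nbh E x \<longrightarrow> \<not> E x' (phi x))"
    unfolding phi_def using someI_ex[OF F3[OF assms]] .
  then show "E x (phi x)" "\<And>x'. x' \<in> X \<Longrightarrow> nbh E x' \<subset> nbh E x \<Longrightarrow> \<not> E x' (phi x)" by blast+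
qed

lemma phiY: "x \<in> X \<Longrightarrow> phi x \<in> Y" using otherX phi_spec(1) by blast
lemma phiV: "x \<in> X \<Longrightarrow> phi x \<in> V" using phiY YV by blast
lemma phiX: "x \<in> X \<Longrightarrow> phi x \<notin> X" using phiY disj by blast

lemma key: assumes x: "x \<in> X" and x': "x' \<in> X"
  shows "E x' (phi x) \<longleftrightarrow> nbh E x \<subseteq> nbh E x'"
proof
  assume e: "E x' (phi x)"
  show "nbh E x \<subseteq> nbh E x'"
  proof (rule ccontr)
    assume "\<not> nbh E x \<subseteq> nbh E x'"
    then have "nbh E x' \<subset> nbh E x" using chain[OF x x'] by blast
    then show False using phi_spec(2)[OF x x'] e by blast
  qed
next
  assume "nbh E x \<subseteq> nbh E x'"
  then show "E x' (phi x)" using phi_spec(1)[OF x] unfolding nbh_def by blast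
qed

lemma keyS: "x \<in> X \<Longrightarrow> x' \<in> X \<Longrightarrow> E (phi x) x' \<longleftrightarrow> nbh E x \<subseteq> nbh E x'"
  using key sy by blast

lemma phi_inj: assumes "x \<in> X" "c \<in> X" "phi x = phi c" shows "x = c"
proof -
  have "nbh E c \<subseteq> nbh E x" using key[OF assms(2) assms(1)] phi_spec(1)[OF assms(1)] assms(3) by simp
  moreover have "nbh E x \<subseteq> nbh E c" using key[OF assms(1) assms(2)] phi_spec(1)[OF assms(2)] assms(3) by simp
  ultimately show ?thesis using twins XV assms by blast
qed

lemma nbhY: "y \<in> Y \<Longrightarrow> nbh E y \<subseteq> X" using otherY unfolding nbh_def by blast

lemma phi_surj: assumes y: "y \<in> Y" shows "\<exists>x\<in>X. y = phi x"
proof -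
  obtain x where x: "E y x" and xm: "\<forall>y'\<in>Y. nbh E y' \<subset> nbh E y \<longrightarrow> \<not> E y' x"
    using crit.F3[OF sym y] by blast
  have xX: "x \<in> X" using otherY[OF y x] .
  have eq: "E y x' \<longleftrightarrow> nbh E x \<subseteq> nbh E x'" if x': "x' \<in> X" for x'
  proof
    assume e: "E y x'"
    show "nbh E x \<subseteq> nbh E x'"
    proof (rule ccontr)
      assume "\<not> nbh E x \<subseteq> nbh E x'"
      then obtain y' where y': "E x y'" "\<not> E x' y'" unfolding nbh_def by blast
      have y'Y: "y' \<in> Y" using otherX[OF xX y'(1)] .
      have "x' \<in> nbh E y" "x' \<notin> nbh E y'" using e y'(2) sy unfolding nbh_def by blast+
      then have "nbh E y' \<subset> nbh E y" using crit.chain[OF sym y y'Y] by blast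
      then show False using xm y'Y y'(1) sy by blast
    qed
  next
    assume "nbh E x \<subseteq> nbh E x'"
    then show "E y x'" using x sy unfolding nbh_def by blast
  qed
  have "nbh E y = nbh E (phi x)"
  proof (intro equalityI subsetI)
    fix w assume w: "w \<in> nbh E y"
    then have wX: "w \<in> X" using nbhY[OF y] by blast
    then show "w \<in> nbh E (phi x)" using w eq[OF wX] keyS[OF xX wX] unfolding nbh_def by blast
  next
    fix w assume w: "w \<in> nbh E (phi x)"
    then have wX: "w \<in> X" using nbhY[OF phiY[OF xX]] by blast
    then show "w \<in> nbh E y" using w eq[OF wX] keyS[OF xX wX] unfolding nbh_def by blast
  qed
  then have "y = phi x" using twins YV[OF y] phiV[OF xX] by blast
  then show ?thesis using xX by blast
qed

lemma Vcases: "u \<in> V \<Longrightarrow> u \<in> X \<or> (\<exists>c\<in>X. u = phi c)"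
  using cov phi_surj by blast

lemma strict_twins: "a \<in> X \<Longrightarrow> b \<in> X \<Longrightarrow> nbh E a \<subseteq> nbh E b \<Longrightarrow> a \<noteq> b \<Longrightarrow> nbh E a \<subset> nbh E b"
  using twins XV by blast

end

context crit begin

lemma F4: assumes x0: "x0 \<in> X" and ex: "\<exists>l\<in>X. nbh E x0 \<subset> nbh E l"
  shows "\<exists>p\<in>X. nbh E x0 \<subset> nbh E p \<and> \<not> (\<exists>z\<in>X. nbh E x0 \<subset> nbh E z \<and> nbh E z \<subset> nbh E p)"
proof (rule ccontr)
  assume "\<not> ?thesis"
  then have NP: "\<And>p. p \<in> X \<Longrightarrow> nbh E x0 \<subset> nbh E p \<Longrightarrow> \<exists>z\<in>X. nbh E x0 \<subset> nbh E z \<and> nbh E z \<subset> nbh E p"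
    by blast
  obtain M where M: "module (V - {x0}) E M" "M \<noteq> {}" "\<forall>z. M \<noteq> {z}" "M \<noteq> V - {x0}"
    using delM XV[OF x0] by blast
  have MV: "M \<subseteq> V - {x0}" using M(1) unfolding module_def by blast
  obtain m1 m2 where m: "m1 \<in> M" "m2 \<in> M" "E x0 m1" "\<not> E x0 m2"
    using dist[OF XV[OF x0] M] by blast
  have Xout: "c \<in> V - {x0}" if "c \<in> X" "c \<noteq> x0" for c using that XV by blast
  have Yout: "phi c \<in> V - {x0}" if "c \<in> X" for c using that phiV phiX x0 by blast
  show False
  proof (cases "\<exists>a\<in>X. nbh E a \<subset> nbh E x0 \<and> phi a \<in> M")
    case True
    then obtain a where a: "a \<in> X" "nbh E a \<subset> nbh E x0" "phi a \<in> M" by blast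
    have ax0: "a \<noteq> x0" using a by blast
    have aM: "a \<in> M"
    proof (rule ccontr)
      assume "a \<notin> M"
      then have "E a m2" using modU[OF M(1) Xout[OF a(1) ax0] _ a(3) m(2)] phi_spec(1)[OF a(1)] by blast
      moreover have "m2 \<notin> X" using noXX a(1) calculation by blast
      ultimately obtain b where b: "b \<in> X" "m2 = phi b" using Vcases MV m(2) by blast
      then have "nbh E b \<subseteq> nbh E a" using key[OF b(1) a(1)] \<open>E a m2\<close> by blast
      then have "E x0 (phi b)" using key[OF b(1) x0] a(2) by blast
      then show False using m(4) b by blast
    qed
    have pc: "phi c \<in> M" if c: "c \<in> X" "c \<noteq> x0" for c
    proof (rule ccontr)
      assume cn: "phi c \<notin> M"
      have "\<not> E (phi c) (phi a)" using noYY phiY c a by blast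
      then have nA: "\<forall>m\<in>M. \<not> E (phi c) m" using modN[OF M(1) Yout[OF c(1)] cn a(3)] by blast
      then have "c \<notin> M" using phi_spec(1)[OF c(1)] sy by blast
      then have "\<not> E c (phi a)" using modN[OF M(1) Xout[OF c] _ aM a(3)] noXX[OF c(1) a(1)] by blast
      moreover have "\<not> E (phi c) a" using nA aM by blast
      ultimately show False using key[OF a(1) c(1)] keyS[OF c(1) a(1)] chain[OF a(1) c(1)] by blast
    qed
    have cc: "c \<in> M" if c: "c \<in> X" "c \<noteq> x0" for c
    proof (rule ccontr)
      assume cn: "c \<notin> M"
      have "\<not> E c a" using noXX c a by blast
      then have "\<not> E c (phi c)" using modN[OF M(1) Xout[OF c] cn aM pc[OF c]] by blast
      then show False using phi_spec(1)[OF c(1)] by blast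
    qed
    have px: "phi x0 \<notin> M"
    proof
      assume "phi x0 \<in> M"
      have "V - {x0} \<subseteq> M"
      proof
        fix u assume u: "u \<in> V - {x0}"
        then consider "u \<in> X" | c where "c \<in> X" "u = phi c" using Vcases by blast
        then show "u \<in> M"
        proof cases
          case 1 then show ?thesis using cc u by blast
        next
          case 2 then show ?thesis using pc \<open>phi x0 \<in> M\<close> by (cases "c = x0") auto
        qed
      qed
      then show False using MV M(4) by blast
    qed
    have "\<not> E (phi x0) (phi a)" using noYY phiY x0 a by blast
    then have nA: "\<forall>m\<in>M. \<not> E (phi x0) m" using modN[OF M(1) Yout[OF x0] px a(3)] by blast
    obtain l where l: "l \<in> X" "nbh E x0 \<subset> nbh E l" using ex by blast
    then have "l \<noteq> x0" by blast
    then have "l \<in> M" using cc l by blast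
    moreover have "E (phi x0) l" using keyS[OF x0 l(1)] l(2) by blast
    ultimately show False using nA by blast
  next
    case False
    have m1Y: "m1 \<in> Y" using otherX[OF x0 m(3)] .
    then obtain c where c: "c \<in> X" "m1 = phi c" using phi_surj by blast
    then have "nbh E c \<subseteq> nbh E x0" using key[OF c(1) x0] m(3) by blast
    moreover have "\<not> nbh E c \<subset> nbh E x0" using False c m(1) by blast
    ultimately have "nbh E c = nbh E x0" by blast
    then have "c = x0" using twins XV c x0 by blast
    then have px: "phi x0 \<in> M" using c m(1) by blast
    have "\<exists>l\<in>X. nbh E x0 \<subset> nbh E l \<and> l \<in> M"
    proof (cases "m2 \<in> X")
      case True
      obtain l where l: "l \<in> X" "nbh E x0 \<subset> nbh E l" using ex by blast
      have "l \<in> M"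
      proof (rule ccontr)
        assume "l \<notin> M"
        moreover have "E l (phi x0)" using key[OF x0 l(1)] l(2) by blast
        ultimately have "E l m2" using modU[OF M(1) Xout[OF l(1)] _ px m(2)] l by blast
        then show False using noXX l(1) True by blast
      qed
      then show ?thesis using l by blast
    next
      case False
      then obtain b where b: "b \<in> X" "m2 = phi b" using Vcases MV m(2) by blast
      then have "\<not> nbh E b \<subseteq> nbh E x0" using key[OF b(1) x0] m(4) by blast
      then have "nbh E x0 \<subset> nbh E b" using chain[OF b(1) x0] by blast
      then obtain z where z: "z \<in> X" "nbh E x0 \<subset> nbh E z" "nbh E z \<subset> nbh E b" using NP b(1) by blast
      have "z \<in> M"
      proof (rule ccontr)
        assume "z \<notin> M"
        moreover have "E z (phi x0)" using key[OF x0 z(1)] z(2) by blast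
        moreover have "z \<noteq> x0" using z by blast
        ultimately have "E z (phi b)" using modU[OF M(1) Xout[OF z(1)] _ px m(2)] z b by blast
        then show False using key[OF b(1) z(1)] z(3) by blast
      qed
      then show ?thesis using z by blast
    qed
    then obtain l where l: "l \<in> X" "nbh E x0 \<subset> nbh E l" "l \<in> M" by blast
    have noab: "\<not> nbh E c' \<subset> nbh E x0" if c': "c' \<in> X" for c'
    proof
      assume lt: "nbh E c' \<subset> nbh E x0"
      then have "phi c' \<notin> M" using False c' by blast
      moreover have "E (phi c') l" using keyS[OF c' l(1)] lt l(2) by blast
      ultimately have "E (phi c') (phi x0)" using modU[OF M(1) Yout[OF c'] _ l(3) px] by blast
      then show False using noYY phiY c' x0 by blast
    qed
    have pc: "phi c' \<in> M" if c': "c' \<in> X" "c' \<noteq> x0" for c'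
    proof (rule ccontr)
      assume cn: "phi c' \<notin> M"
      have "\<not> E (phi c') (phi x0)" using noYY phiY c' x0 by blast
      then have nA: "\<forall>m\<in>M. \<not> E (phi c') m" using modN[OF M(1) Yout[OF c'(1)] cn px] by blast
      then have "c' \<notin> M" using phi_spec(1)[OF c'(1)] sy by blast
      then have "\<not> E c' (phi x0)" using modN[OF M(1) Xout[OF c'] _ l(3) px] noXX[OF c'(1) l(1)] by blast
      then have "\<not> nbh E x0 \<subseteq> nbh E c'" using key[OF x0 c'(1)] by blast
      then have "nbh E c' \<subset> nbh E x0" using chain[OF x0 c'(1)] by blast
      then show False using noab c'(1) by blast
    qed
    have cc: "c' \<in> M" if c': "c' \<in> X" "c' \<noteq> x0" for c'
    proof (rule ccontr)
      assume cn: "c' \<notin> M"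
      have "\<not> E c' l" using noXX c' l by blast
      then have "\<not> E c' (phi c')" using modN[OF M(1) Xout[OF c'] cn l(3) pc[OF c']] by blast
      then show False using phi_spec(1)[OF c'(1)] by blast
    qed
    have "V - {x0} \<subseteq> M"
    proof
      fix u assume u: "u \<in> V - {x0}"
      then consider "u \<in> X" | c' where "c' \<in> X" "u = phi c'" using Vcases by blast
      then show "u \<in> M"
      proof cases
        case 1 then show ?thesis using cc u by blast
      next
        case 2 then show ?thesis using pc px by (cases "c' = x0") auto
      qed
    qed
    then show False using MV M(4) by blast
  qed
qed

end

context crit begin

definition rr where "rr = {(x, x'). x \<in> X \<and> x' \<in> X \<and> nbh E x' \<subseteq> nbh E x}"

lemma NP: assumes a: "a \<in> X" and b: "b \<in> X"
  shows "nbh E (phi a) \<subseteq> nbh E (phi b) \<longleftrightarrow> nbh E b \<subseteq> nbh E a"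
proof
  assume h: "nbh E (phi a) \<subseteq> nbh E (phi b)"
  have "a \<in> nbh E (phi a)" using keyS[OF a a] unfolding nbh_def by blast
  then have "a \<in> nbh E (phi b)" using h by blast
  then show "nbh E b \<subseteq> nbh E a" using keyS[OF b a] unfolding nbh_def by blast
next
  assume h: "nbh E b \<subseteq> nbh E a"
  show "nbh E (phi a) \<subseteq> nbh E (phi b)"
  proof
    fix w assume w: "w \<in> nbh E (phi a)"
    then have wX: "w \<in> X" using nbhY phiY a by blast
    then show "w \<in> nbh E (phi b)" using w h keyS[OF a wX] keyS[OF b wX] unfolding nbh_def by blast
  qed
qed

lemma NPs: "a \<in> X \<Longrightarrow> b \<in> X \<Longrightarrow> nbh E (phi a) \<subset> nbh E (phi b) \<longleftrightarrow> nbh E b \<subset> nbh E a"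
  using NP[of a b] NP[of b a] unfolding psubset_eq by blast

lemma half: "half_graph_wrt V E X Y rr phi"
  unfolding half_graph_wrt_def
proof (intro conjI)
  show "X \<inter> Y = {}" "X \<union> Y = V" by (rule disj, rule cov)
  show "rr \<subseteq> X \<times> X" unfolding rr_def by blast
  show "linear_order_on X rr"
    unfolding linear_order_on_def partial_order_on_def preorder_on_def refl_on_def trans_def
      antisym_def total_on_def
  proof (intro conjI ballI allI impI)
    show "rr \<subseteq> X \<times> X" unfolding rr_def by blast
  next
    fix x assume "x \<in> X" then show "(x, x) \<in> rr" unfolding rr_def by blast
  next
    fix x y z assume "(x, y) \<in> rr" "(y, z) \<in> rr" then show "(x, z) \<in> rr" unfolding rr_def by blast
  next
    fix x y assume "(x, y) \<in> rr" "(y, x) \<in> rr"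
    then show "x = y" unfolding rr_def using twins XV by blast
  next
    fix x y assume "x \<in> X" "y \<in> X" "x \<noteq> y"
    then show "(x, y) \<in> rr \<or> (y, x) \<in> rr" unfolding rr_def using chain by blast
  qed
  show "bij_betw phi X Y"
    unfolding bij_betw_def inj_on_def using phi_inj phiY phi_surj by blast
  show "\<forall>u v. E u v \<longleftrightarrow> (\<exists>x\<in>X. \<exists>x'\<in>X. (x, x') \<in> rr \<and>
                         ((u = x \<and> v = phi x') \<or> (v = x \<and> u = phi x')))"
  proof (intro allI iffI)
    fix u v assume e: "E u v"
    then have "u \<in> V" using EV by blast
    then consider "u \<in> X" | c where "c \<in> X" "u = phi c" using Vcases by blast
    then show "\<exists>x\<in>X. \<exists>x'\<in>X. (x, x') \<in> rr \<and> ((u = x \<and> v = phi x') \<or> (v = x \<and> u = phi x'))"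
    proof cases
      case 1
      then obtain c where c: "c \<in> X" "v = phi c" using otherX e phi_surj by blast
      then have "(u, c) \<in> rr" using key[OF c(1) 1] e 1 unfolding rr_def by blast
      then show ?thesis using 1 c by blast
    next
      case 2
      then have vX: "v \<in> X" using otherY[OF phiY] e by blast
      then have "(v, c) \<in> rr" using keyS[OF 2(1) vX] e 2 unfolding rr_def by blast
      then show ?thesis using 2 vX by blast
    qed
  next
    fix u v assume "\<exists>x\<in>X. \<exists>x'\<in>X. (x, x') \<in> rr \<and> ((u = x \<and> v = phi x') \<or> (v = x \<and> u = phi x'))"
    then obtain x x' where xx: "x \<in> X" "x' \<in> X" "(x, x') \<in> rr" "(u = x \<and> v = phi x') \<or> (v = x \<and> u = phi x')"
      by blast
    have "E x (phi x')" using key[OF xx(2) xx(1)] xx(3) unfolding rr_def by blast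
    then show "E u v" using xx(4) sy by blast
  qed
qed

lemma discrete: "discrete_order X rr"
  unfolding discrete_order_def
proof (intro conjI ballI impI)
  fix x assume x: "x \<in> X" and "\<exists>y\<in>X. (y, x) \<in> rr \<and> y \<noteq> x"
  then obtain y where y: "y \<in> X" "nbh E x \<subseteq> nbh E y" "y \<noteq> x" unfolding rr_def by blast
  then have "nbh E x \<subset> nbh E y" using strict_twins x by metis
  then obtain p where p: "p \<in> X" "nbh E x \<subset> nbh E p"
      "\<not> (\<exists>z\<in>X. nbh E x \<subset> nbh E z \<and> nbh E z \<subset> nbh E p)" using F4[OF x] y by blast
  have "\<not> (\<exists>z\<in>X. (p, z) \<in> rr \<and> (z, x) \<in> rr \<and> z \<noteq> p \<and> z \<noteq> x)"
  proof
    assume "\<exists>z\<in>X. (p, z) \<in> rr \<and> (z, x) \<in> rr \<and> z \<noteq> p \<and> z \<noteq> x"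
    then obtain z where z: "z \<in> X" "nbh E z \<subseteq> nbh E p" "nbh E x \<subseteq> nbh E z" "z \<noteq> p" "z \<noteq> x"
      unfolding rr_def by blast
    have "nbh E z \<subset> nbh E p" using strict_twins[OF z(1) p(1) z(2) z(4)] .
    moreover have "nbh E x \<subset> nbh E z" using strict_twins[OF x z(1) z(3)] z(5) by metis
    ultimately show False using p(3) z(1) by blast
  qed
  moreover have "(p, x) \<in> rr" "p \<noteq> x" using p x unfolding rr_def by auto
  ultimately show "\<exists>p\<in>X. (p, x) \<in> rr \<and> p \<noteq> x \<and>
           \<not> (\<exists>z\<in>X. (p, z) \<in> rr \<and> (z, x) \<in> rr \<and> z \<noteq> p \<and> z \<noteq> x)" using p(1) by blast
next
  fix x assume x: "x \<in> X" and "\<exists>y\<in>X. (x, y) \<in> rr \<and> y \<noteq> x"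
  then obtain y where y: "y \<in> X" "nbh E y \<subseteq> nbh E x" "y \<noteq> x" unfolding rr_def by blast
  then have "nbh E y \<subset> nbh E x" using strict_twins x by metis
  then have "nbh E (phi x) \<subset> nbh E (phi y)" using NPs[OF x y(1)] by blast
  then obtain q where q: "q \<in> Y" "nbh E (phi x) \<subset> nbh E q"
      "\<not> (\<exists>z\<in>Y. nbh E (phi x) \<subset> nbh E z \<and> nbh E z \<subset> nbh E q)"
    using crit.F4[OF sym phiY[OF x]] phiY[OF y(1)] by blast
  obtain s where s: "s \<in> X" "q = phi s" using phi_surj q(1) by blast
  have sx: "nbh E s \<subset> nbh E x" using NPs[OF x s(1)] q(2) s(2) by blast
  have "\<not> (\<exists>z\<in>X. (x, z) \<in> rr \<and> (z, s) \<in> rr \<and> z \<noteq> x \<and> z \<noteq> s)"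
  proof
    assume "\<exists>z\<in>X. (x, z) \<in> rr \<and> (z, s) \<in> rr \<and> z \<noteq> x \<and> z \<noteq> s"
    then obtain z where z: "z \<in> X" "nbh E z \<subseteq> nbh E x" "nbh E s \<subseteq> nbh E z" "z \<noteq> x" "z \<noteq> s"
      unfolding rr_def by blast
    have "nbh E z \<subset> nbh E x" using strict_twins[OF z(1) x z(2) z(4)] .
    then have 1: "nbh E (phi x) \<subset> nbh E (phi z)" using NPs[OF x z(1)] by blast
    have "nbh E s \<subset> nbh E z" using strict_twins[OF s(1) z(1) z(3)] z(5) by metis
    then have 2: "nbh E (phi z) \<subset> nbh E (phi s)" using NPs[OF z(1) s(1)] by blast
    show False using q(3) 1 2 s(2) phiY[OF z(1)] by blast
  qed
  moreover have "(x, s) \<in> rr" "s \<noteq> x" using sx s x unfolding rr_def by auto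
  ultimately show "\<exists>s\<in>X. (x, s) \<in> rr \<and> s \<noteq> x \<and>
           \<not> (\<exists>z\<in>X. (x, z) \<in> rr \<and> (z, s) \<in> rr \<and> z \<noteq> x \<and> z \<noteq> s)" using s(1) by blast
qed

lemma result: "discrete_half_graph V E"
  unfolding discrete_half_graph_def using half discrete by blast

end

theorem theorem1p21:
  fixes V :: "'a set" and E :: "'a \<Rightarrow> 'a \<Rightarrow> bool"
  assumes "graph V E" and "bipartite V E" and "infinite V \<or> 4 \<le> card V"
  shows "discrete_half_graph V E \<longleftrightarrow> (\<not> contains_induced_P5 V E \<and> critical V E)"
proof
  assume "discrete_half_graph V E"
  then obtain X Y r \<phi> where h: "half_graph_wrt V E X Y r \<phi>" "discrete_order X r"
    unfolding discrete_half_graph_def by blast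
  interpret hgd V E X Y r \<phi> using assms(1,3) h by unfold_locales
  show "\<not> contains_induced_P5 V E \<and> critical V E" using noP5 critical by blast
next
  assume h: "\<not> contains_induced_P5 V E \<and> critical V E"
  obtain X Y where XY: "X \<inter> Y = {}" "X \<union> Y = V" "\<forall>u\<in>X. \<forall>v\<in>X. \<not> E u v" "\<forall>u\<in>Y. \<forall>v\<in>Y. \<not> E u v"
    using assms(2) unfolding bipartite_def by blast
  interpret crit V E X Y using assms(1,3) h XY by unfold_locales auto
  show "discrete_half_graph V E" by (rule result)
qed

end
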